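(* Let two groups of positive integer moduli be given: Group $j$ ($j=1,2$) consists of $L_j\ge1$ moduli $0<M_{j,1}<\dots<M_{j,L_j}$; put $\delta_j=\operatorname{lcm}(M_{j,1},\dots,M_{j,L_j})$ and assume $\delta_1\ne\delta_2$. Let $N$ be an integer with $0\le N<\operatorname{lcm}(\delta_1,\delta_2)$, let $r_{j,i}$ be the remainder of $N$ modulo $M_{j,i}$ and $n_{j,i}=(N-r_{j,i})/M_{j,i}$. Let $\tilde r_{j,i}$ be integers with $0\le\tilde r_{j,i}\le M_{j,i}-1$ and $|\tilde r_{j,i}-r_{j,i}|\le\tau_j$ for all $i$, where $$\tau_j<\min(G_j,G)\quad (j=1,2),$$ with $G_j=\max_{1\le i\le L_j}\min_{q\ne i}\gcd(M_{j,i},M_{j,q})/4$ if $L_j\ge2$, $G_j=M_{j,1}/4$ if $L_j=1$, and $G=\gcd(\delta_1,\delta_2)/4$. Then the two-stage algorithm (described in the context) outputs $\hat n_{j,i}=n_{j,i}$ for all $1\le i\le L_j$, $j=1,2$, and its estimate $\hat N$ satisfies $$|\hat N-N|\le\left[\frac{L_1\tau_1+L_2\tau_2}{L_1+L_2}\right].$$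
   Context: For $x\in\mathbb R$, $[x]$ denotes the unique integer with $-1/2\le x-[x]<1/2$. Single-stage algorithm $\mathcal A$: for pairwise distinct positive integers $P_1,\dots,P_m$ ($m\ge2$), a reference index $k$ and integers $x_1,\dots,x_m$: for $i\ne k$ put $m_{ki}=\gcd(P_k,P_i)$, $\Gamma_{ki}=P_k/m_{ki}$, $\Gamma_{ik}=P_i/m_{ki}$, $\hat q_{ik}=[(x_i-x_k)/m_{ki}]$, let $\bar\Gamma_{ki}$ be an inverse of $\Gamma_{ki}$ modulo $\Gamma_{ik}$ and $\hat\xi_{ik}\equiv\hat q_{ik}\bar\Gamma_{ki}\pmod{\Gamma_{ik}}$, $0\le\hat\xi_{ik}<\Gamma_{ik}$; let $\hat n_k$ be the least nonnegative $y$ with $y\equiv\hat\xi_{ik}\pmod{\Gamma_{ik}}$ for all $i\ne k$ (the algorithm fails if none exists), and $\hat n_i=(\hat n_k\Gamma_{ki}-\hat q_{ik})/\Gamma_{ik}$ for $i\ne k$. Two-stage algorithm: Stage 1: for each group $j$, if $L_j\ge2$ apply $\mathcal A$ to $M_{j,1},\dots,M_{j,L_j}$ with inputs $\tilde r_{j,1},\dots,\tilde r_{j,L_j}$ and a reference index $k_j$ attaining $\max_i\min_{q\ne i}\gcd(M_{j,i},M_{j,q})$, obtaining $\hat K_{j,1},\dots,\hat K_{j,L_j}$; if $L_j=1$ set $\hat K_{j,1}=0$. Put $\hat N_j=[\frac1{L_j}\sum_{i=1}^{L_j}(\hat K_{j,i}M_{j,i}+\tilde r_{j,i})]$. Stage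 2: apply $\mathcal A$ to the moduli $\delta_1,\delta_2$ with inputs $\hat N_1,\hat N_2$ (any reference index), obtaining $\hat l_1,\hat l_2$. Output $\hat n_{j,i}=\hat l_j\delta_j/M_{j,i}+\hat K_{j,i}$ and $\hat N=[\frac1{L_1+L_2}\sum_{j=1}^2\sum_{i=1}^{L_j}(\hat n_{j,i}M_{j,i}+\tilde r_{j,i})]$. *)

theory Defs
  imports "HOL-Number_Theory.Number_Theory"
begin

text \<open>Rounding [x]: the unique integer with -1/2 \<le> x - [x] < 1/2.\<close>
definition rnd :: "real \<Rightarrow> int" where
  "rnd x = \<lfloor>x + 1/2\<rfloor>"

text \<open>Single-stage algorithm A. Indices are 1..m; P i are the moduli, k the
  reference index, x i the inputs. Returns None if the algorithm fails.\<close>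
definition alg_A :: "nat \<Rightarrow> (nat \<Rightarrow> int) \<Rightarrow> nat \<Rightarrow> (nat \<Rightarrow> int) \<Rightarrow> (nat \<Rightarrow> int) option" where
  "alg_A m P k x = (let
     mm = (\<lambda>i. gcd (P k) (P i));
     Gki = (\<lambda>i. P k div mm i);
     Gik = (\<lambda>i. P i div mm i);
     q = (\<lambda>i. rnd (real_of_int (x i - x k) / real_of_int (mm i)));
     ginv = (\<lambda>i. SOME b. [Gki i * b = 1] (mod Gik i));
     xi = (\<lambda>i. (q i * ginv i) mod Gik i);
     S = {y::nat. \<forall>i\<in>{1..m} - {k}. [int y = xi i] (mod Gik i)}
   in if S = {} then None else
     (let nk = int (LEAST y. y \<in> S) in
      Some (\<lambda>i. if i = k then nk else (nk * Gki i - q i) div Gik i)))"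

definition mingcd :: "(nat \<Rightarrow> int) \<Rightarrow> nat \<Rightarrow> nat \<Rightarrow> int" where
  "mingcd Mj Lj i = Min {gcd (Mj i) (Mj q) | q. q \<in> {1..Lj} \<and> q \<noteq> i}"

definition delta :: "(nat \<Rightarrow> nat \<Rightarrow> int) \<Rightarrow> (nat \<Rightarrow> nat) \<Rightarrow> nat \<Rightarrow> int" where
  "delta M L j = Lcm (M j ` {1..L j})"

text \<open>Groups j = 1,2; group j has moduli M j 1..M j (L j),
  inputs rt j i, stage-1 reference index kref j, stage-2 reference index kk.\<close>
definition two_stage :: "(nat \<Rightarrow> nat) \<Rightarrow> (nat \<Rightarrow> nat \<Rightarrow> int) \<Rightarrow> (nat \<Rightarrow> nat \<Rightarrow> int)
    \<Rightarrow> (nat \<Rightarrow> nat) \<Rightarrow> nat \<Rightarrow> ((nat \<Rightarrow> nat \<Rightarrow> int) \<times> int) option" where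
  "two_stage L M rt kref kk = (let
     Khat = (\<lambda>j. if L j \<ge> 2 then alg_A (L j) (M j) (kref j) (rt j) else Some (\<lambda>_. 0))
   in if Khat 1 = None \<or> Khat 2 = None then None else
   (let K = (\<lambda>j. the (Khat j));
        Nh = (\<lambda>j. rnd ((\<Sum>i=1..L j. real_of_int (K j i * M j i + rt j i)) / real (L j)));
        st2 = alg_A 2 (delta M L) kk Nh
    in if st2 = None then None else
    (let l = the st2;
         nh = (\<lambda>j i. l j * delta M L j div M j i + K j i);
         Nhat = rnd ((\<Sum>j\<in>{1,2}. \<Sum>i=1..L j. real_of_int (nh j i * M j i + rt j i))
                     / real (L 1 + L 2))
     in Some (nh, Nhat))))"

end

theory Submission
  imports Defs
begin


lemma rnd_int_add: "rnd (real_of_int a + y) = a + rnd y"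
  unfolding rnd_def using floor_add_int[of "y + 1/2" a] by (simp add: add_ac)

lemma rnd_small: "-1/2 \<le> y \<Longrightarrow> y < 1/2 \<Longrightarrow> rnd y = 0"
  unfolding rnd_def by (simp add: floor_eq_iff)

lemma rnd_mono: "x \<le> y \<Longrightarrow> rnd x \<le> rnd y"
  unfolding rnd_def by (simp add: floor_mono)

lemma rnd_of_int: "rnd (real_of_int a) = a"
  unfolding rnd_def by (simp add: floor_eq_iff)

lemma rnd_abs: assumes "\<bar>y\<bar> \<le> B" shows "\<bar>rnd y\<bar> \<le> rnd B"
proof -
  have "rnd y \<le> rnd B" using assms by (intro rnd_mono) auto
  moreover have "rnd (-B) \<le> rnd y" using assms by (intro rnd_mono) auto
  moreover have "- rnd B \<le> rnd (-B)"
  proof -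
    have "B + 1/2 < real_of_int \<lfloor>B + 1/2\<rfloor> + 1" by (rule real_of_int_floor_add_one_gt)
    then have "real_of_int (- \<lfloor>B + 1/2\<rfloor>) \<le> -B + 1/2" by linarith
    then show ?thesis unfolding rnd_def by (simp only: le_floor_iff)
  qed
  ultimately show ?thesis by linarith
qed

lemma alg_A_correct:
  fixes P x :: "nat \<Rightarrow> int" and X :: int
  assumes k: "k \<in> {1..m}" and Ppos: "\<forall>i\<in>{1..m}. 0 < P i"
    and X0: "0 \<le> X" and XL: "X < Lcm (P ` {1..m})"
    and err: "\<forall>i\<in>{1..m}-{k}. 2 * \<bar>(x i - X mod P i) - (x k - X mod P k)\<bar> < gcd (P k) (P i)"
  shows "\<exists>f. alg_A m P k x = Some f \<and> (\<forall>i\<in>{1..m}. f i = X div P i)"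
proof -
  define mm where "mm = (\<lambda>i. gcd (P k) (P i))"
  define Gki where "Gki = (\<lambda>i. P k div mm i)"
  define Gik where "Gik = (\<lambda>i. P i div mm i)"
  define q where "q = (\<lambda>i. rnd (real_of_int (x i - x k) / real_of_int (mm i)))"
  define ginv where "ginv = (\<lambda>i. SOME b. [Gki i * b = 1] (mod Gik i))"
  define xi where "xi = (\<lambda>i. (q i * ginv i) mod Gik i)"
  define S where "S = {y::nat. \<forall>i\<in>{1..m} - {k}. [int y = xi i] (mod Gik i)}"
  define K where "K = (\<lambda>i. X div P i)"
  define Q where "Q = (\<lambda>i. K k * Gki i - K i * Gik i)"
  have Pk: "P k > 0" using k Ppos by auto
  have Xdec: "X = K i * P i + X mod P i" for i unfolding K_def by simp
  have Kk0: "K k \<ge> 0" unfolding K_def using X0 Pk by (simp add: pos_imp_zdiv_nonneg_iff)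
  have mmpos: "mm i > 0" for i unfolding mm_def using Pk by simp
  have Pk_eq: "P k = mm i * Gki i" for i unfolding Gki_def mm_def by simp
  have Pi_eq: "P i = mm i * Gik i" for i unfolding Gik_def mm_def by simp
  have cop: "coprime (Gki i) (Gik i)" if "i \<in> {1..m}" for i
  proof -
    have "P i > 0" using that Ppos by blast
    then have "P i \<noteq> 0" by simp
    then show ?thesis unfolding Gki_def Gik_def mm_def
      using Pk div_gcd_coprime by blast
  qed
  have qQ: "q i = Q i" if i: "i \<in> {1..m}-{k}" for i
  proof -
    have d1: "K k * P k - K i * P i = mm i * Q i" unfolding Q_def
      by (simp add: Pk_eq[of i] Pi_eq[of i] algebra_simps)
    have d2: "X mod P i - X mod P k = K k * P k - K i * P i" using Xdec[of i] Xdec[of k] by linarith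
    have d: "x i - x k = mm i * Q i + ((x i - X mod P i) - (x k - X mod P k))"
      using d1 d2 by linarith
    define D where "D = (x i - X mod P i) - (x k - X mod P k)"
    have D: "2 * \<bar>D\<bar> < mm i" using err i unfolding D_def mm_def by auto
    have "real_of_int (x i - x k) / real_of_int (mm i) = real_of_int (Q i) + real_of_int D / real_of_int (mm i)"
      using d mmpos[of i] unfolding D_def by (simp add: field_simps)
    moreover have "-1/2 \<le> real_of_int D / real_of_int (mm i)" "real_of_int D / real_of_int (mm i) < 1/2"
    proof -
      have "2 * \<bar>real_of_int D\<bar> < real_of_int (mm i)" using D by linarith
      then show "-1/2 \<le> real_of_int D / real_of_int (mm i)" "real_of_int D / real_of_int (mm i) < 1/2"
        using mmpos[of i] by (auto simp: field_simps abs_less_iff)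
    qed
    ultimately show ?thesis unfolding q_def by (simp add: rnd_int_add rnd_small)
  qed
  have xiK: "[K k = xi i] (mod Gik i)" if i: "i \<in> {1..m}-{k}" for i
  proof -
    have "\<exists>b. [Gki i * b = 1] (mod Gik i)" using cop i cong_solve_coprime_int by auto
    then have g: "[Gki i * ginv i = 1] (mod Gik i)" unfolding ginv_def by (rule someI_ex)
    have "[Q i = K k * Gki i] (mod Gik i)" unfolding Q_def
      by (simp add: cong_iff_dvd_diff)
    then have "[Q i * ginv i = K k * (Gki i * ginv i)] (mod Gik i)"
      by (metis cong_scalar_right mult.assoc)
    also have "[K k * (Gki i * ginv i) = K k * 1] (mod Gik i)" using g by (rule cong_scalar_left)
    finally have "[Q i * ginv i = K k] (mod Gik i)" by simp
    then show ?thesis unfolding xi_def qQ[OF i]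
      by (metis cong_def cong_sym mod_mod_trivial)
  qed
  have KS: "nat (K k) \<in> S" unfolding S_def using xiK Kk0 by simp
  have least: "nat (K k) \<le> y" if y: "y \<in> S" for y
  proof (rule ccontr)
    assume "\<not> nat (K k) \<le> y"
    then have lt: "int y < K k" by simp
    have "a dvd P k * (K k - int y)" if i: "a \<in> P ` {1..m}" for a
    proof -
      obtain j where j: "j \<in> {1..m}" "a = P j" using i by auto
      show ?thesis
      proof (cases "j = k")
        case True then show ?thesis using j by simp
      next
        case False
        then have "[int y = xi j] (mod Gik j)" using y j unfolding S_def by auto
        then have "[int y = K k] (mod Gik j)" using xiK[of j] j False
          by (meson DiffI cong_sym cong_trans singletonD)
        then obtain t where t: "K k - int y = Gik j * t"
          by (metis cong_iff_dvd_diff dvd_def cong_sym)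
        have "P k * (K k - int y) = P j * (Gki j * t)"
          using t Pk_eq[of j] Pi_eq[of j] by (simp add: algebra_simps)
        then show ?thesis using j by simp
      qed
    qed
    then have "Lcm (P ` {1..m}) dvd P k * (K k - int y)" by (simp add: Lcm_dvd_iff)
    moreover have "0 < P k * (K k - int y)" using lt Pk by simp
    moreover have "P k * (K k - int y) \<le> K k * P k"
    proof -
      have "0 \<le> P k * int y" using Pk by simp
      moreover have "P k * (K k - int y) = K k * P k - P k * int y" by (simp add: algebra_simps)
      ultimately show ?thesis by linarith
    qed
    moreover have "K k * P k \<le> X"
    proof -
      have "0 \<le> X mod P k" using Pk by simp
      then show ?thesis using Xdec[of k] by linarith
    qed
    ultimately have "Lcm (P ` {1..m}) \<le> X" using zdvd_imp_le by fastforce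
    then show False using XL by simp
  qed
  have Lst: "(LEAST y. y \<in> S) = nat (K k)"
    using KS least by (intro Least_equality) auto
  have Snonempty: "S \<noteq> {}" using KS by auto
  define f where "f = (\<lambda>i. if i = k then int (nat (K k)) else (int (nat (K k)) * Gki i - q i) div Gik i)"
  have unf: "alg_A m P k x = (if S = {} then None else Some (\<lambda>i. if i = k then int (LEAST y. y \<in> S) else (int (LEAST y. y\<in>S) * Gki i - q i) div Gik i))"
    unfolding alg_A_def Let_def S_def xi_def q_def ginv_def Gik_def Gki_def mm_def by (rule refl)
  have eq: "alg_A m P k x = Some f"
    unfolding unf f_def Lst using Snonempty by simp
  have "f i = X div P i" if i: "i \<in> {1..m}" for i
  proof (cases "i = k")
    case True then show ?thesis unfolding f_def K_def using Kk0 K_def by simp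
  next
    case False
    then have "f i = (K k * Gki i - Q i) div Gik i" unfolding f_def using Kk0 qQ i by simp
    also have "\<dots> = K i"
    proof -
      have e: "K k * Gki i - Q i = K i * Gik i" unfolding Q_def by simp
      have "P i > 0" using Ppos i by blast
      then have "0 < mm i * Gik i" using Pi_eq[of i] by simp
      then have "Gik i > 0" using mmpos[of i] zero_less_mult_pos by blast
      then show ?thesis unfolding e by simp
    qed
    finally show ?thesis unfolding K_def .
  qed
  then show ?thesis using eq by blast
qed



lemma pos_incr:
  fixes f :: "nat \<Rightarrow> int"
  assumes "0 < f 1" "\<forall>i. 1 \<le> i \<and> i < n \<longrightarrow> f i < f (i+1)"
  shows "\<forall>i\<in>{1..n}. 0 < f i"
proof
  fix i assume "i \<in> {1..n}"
  then have "1 \<le> i" "i \<le> n" by auto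
  then show "0 < f i"
  proof (induction i rule: nat_induct_at_least)
    case base then show ?case using assms by simp
  next
    case (Suc i) then show ?case using assms(2) by force
  qed
qed

lemma aux4: "(x::real) \<le> 2*t \<Longrightarrow> 4*t < m \<Longrightarrow> m \<le> g \<Longrightarrow> 2*x < g" by linarith

theorem theorem2:
  fixes L :: "nat \<Rightarrow> nat" and M rt :: "nat \<Rightarrow> nat \<Rightarrow> int"
    and N :: int and \<tau> :: "nat \<Rightarrow> real" and kref :: "nat \<Rightarrow> nat" and kk :: nat
  assumes L_pos: "\<forall>j\<in>{1,2}. L j \<ge> 1"
    and M_pos: "\<forall>j\<in>{1,2}. 0 < M j 1"
    and M_incr: "\<forall>j\<in>{1,2}. \<forall>i. 1 \<le> i \<and> i < L j \<longrightarrow> M j i < M j (i+1)"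
    and delta_ne: "delta M L 1 \<noteq> delta M L 2"
    and N_range: "0 \<le> N" "N < lcm (delta M L 1) (delta M L 2)"
    and rt_range: "\<forall>j\<in>{1,2}. \<forall>i\<in>{1..L j}. 0 \<le> rt j i \<and> rt j i \<le> M j i - 1"
    and rt_err: "\<forall>j\<in>{1,2}. \<forall>i\<in>{1..L j}. real_of_int \<bar>rt j i - N mod M j i\<bar> \<le> \<tau> j"
    and tau_bound: "\<forall>j\<in>{1,2}. \<tau> j < min
        (if L j \<ge> 2 then real_of_int (Max (mingcd (M j) (L j) ` {1..L j})) / 4
         else real_of_int (M j 1) / 4)
        (real_of_int (gcd (delta M L 1) (delta M L 2)) / 4)"
    and kref_ok: "\<forall>j\<in>{1,2}. L j \<ge> 2 \<longrightarrow> kref j \<in> {1..L j} \<and>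
        mingcd (M j) (L j) (kref j) = Max (mingcd (M j) (L j) ` {1..L j})"
    and kk_ok: "kk \<in> {1,2}"
  shows "\<exists>nh Nh. two_stage L M rt kref kk = Some (nh, Nh)
    \<and> (\<forall>j\<in>{1,2}. \<forall>i\<in>{1..L j}. nh j i = (N - N mod M j i) div M j i)
    \<and> \<bar>Nh - N\<bar> \<le> rnd ((real (L 1) * \<tau> 1 + real (L 2) * \<tau> 2) / real (L 1 + L 2))"
proof -
  define \<delta> where "\<delta> = delta M L"
  define X where "X = (\<lambda>j. N mod \<delta> j)"
  define e where "e = (\<lambda>j i. rt j i - N mod M j i)"
  define t where "t = (\<lambda>j. \<lfloor>\<tau> j\<rfloor>)"
  define g where "g = gcd (\<delta> 1) (\<delta> 2)"
  have Mpos: "0 < M j i" if "j \<in> {1,2}" "i \<in> {1..L j}" for j i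
    using pos_incr[of "M j" "L j"] M_pos M_incr that by blast
  have dvdd: "M j i dvd \<delta> j" if "j \<in> {1,2}" "i \<in> {1..L j}" for j i
    unfolding \<delta>_def delta_def using that by (intro dvd_Lcm) auto
  have dpos: "0 < \<delta> j" if j: "j \<in> {1,2}" for j
  proof -
    have "0 \<notin> M j ` {1..L j}" using Mpos j by fastforce
    then have "\<delta> j \<noteq> 0" unfolding \<delta>_def delta_def by (simp add: Lcm_0_iff)
    moreover have "0 \<le> \<delta> j" unfolding \<delta>_def delta_def by (rule Lcm_int_greater_eq_0)
    ultimately show ?thesis by simp
  qed
  have X0: "0 \<le> X j" "X j < \<delta> j" if "j \<in> {1,2}" for j
    unfolding X_def using dpos[OF that] by auto
  have Xmod: "X j mod M j i = N mod M j i" if "j \<in> {1,2}" "i \<in> {1..L j}" for j i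
    unfolding X_def using dvdd[OF that] by (simp add: mod_mod_cancel)
  have eb: "real_of_int \<bar>e j i\<bar> \<le> \<tau> j" if "j \<in> {1,2}" "i \<in> {1..L j}" for j i
    unfolding e_def using rt_err that by blast
  have et: "\<bar>e j i\<bar> \<le> t j" if "j \<in> {1,2}" "i \<in> {1..L j}" for j i
    unfolding t_def using eb[OF that] by (simp add: le_floor_iff)
  have tg: "4 * t j < g" if j: "j \<in> {1,2}" for j
  proof -
    have "real_of_int (t j) \<le> \<tau> j" unfolding t_def by simp
    moreover have "\<tau> j < real_of_int g / 4" using tau_bound j unfolding g_def \<delta>_def by auto
    ultimately have "real_of_int (4 * t j) < real_of_int g" by simp
    then show ?thesis by linarith
  qed

  define K where "K = (\<lambda>j. the (if 2 \<le> L j then alg_A (L j) (M j) (kref j) (rt j) else Some (\<lambda>_. 0)))"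
  have stage1: "(if 2 \<le> L j then alg_A (L j) (M j) (kref j) (rt j) else Some (\<lambda>_. 0)) = Some (K j)
      \<and> (\<forall>i\<in>{1..L j}. K j i = X j div M j i)" if j: "j \<in> {1,2}" for j
  proof (cases "2 \<le> L j")
    case True
    have kr: "kref j \<in> {1..L j}" and mx: "mingcd (M j) (L j) (kref j) = Max (mingcd (M j) (L j) ` {1..L j})"
      using kref_ok j True by auto
    have "\<exists>f. alg_A (L j) (M j) (kref j) (rt j) = Some f \<and> (\<forall>i\<in>{1..L j}. f i = X j div M j i)"
    proof (rule alg_A_correct[OF kr])
      show "\<forall>i\<in>{1..L j}. 0 < M j i" using Mpos j by blast
      show "0 \<le> X j" using X0 j by blast
      show "X j < Lcm (M j ` {1..L j})" using X0(2)[OF j] unfolding \<delta>_def delta_def .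
      show "\<forall>i\<in>{1..L j} - {kref j}. 2 * \<bar>rt j i - X j mod M j i - (rt j (kref j) - X j mod M j (kref j))\<bar>
              < gcd (M j (kref j)) (M j i)"
      proof
        fix i assume i: "i \<in> {1..L j} - {kref j}"
        have "rt j i - X j mod M j i - (rt j (kref j) - X j mod M j (kref j)) = e j i - e j (kref j)"
          unfolding e_def using Xmod[OF j] i kr by simp
        moreover have "real_of_int \<bar>e j i - e j (kref j)\<bar> \<le> 2 * \<tau> j"
          using eb[OF j, of i] eb[OF j kr] i by simp
        moreover have "4 * \<tau> j < real_of_int (mingcd (M j) (L j) (kref j))"
          using tau_bound j True mx by auto
        moreover have "mingcd (M j) (L j) (kref j) \<le> gcd (M j (kref j)) (M j i)"
        proof -
          have fin: "finite {gcd (M j (kref j)) (M j q) | q. q \<in> {1..L j} \<and> q \<noteq> kref j}"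
            by simp
          show ?thesis unfolding mingcd_def using i by (intro Min_le[OF fin]) auto
        qed
        ultimately show "2 * \<bar>rt j i - X j mod M j i - (rt j (kref j) - X j mod M j (kref j))\<bar>
              < gcd (M j (kref j)) (M j i)"
        proof -
          assume a: "rt j i - X j mod M j i - (rt j (kref j) - X j mod M j (kref j)) = e j i - e j (kref j)"
            "real_of_int \<bar>e j i - e j (kref j)\<bar> \<le> 2 * \<tau> j"
            "4 * \<tau> j < real_of_int (mingcd (M j) (L j) (kref j))"
            "mingcd (M j) (L j) (kref j) \<le> gcd (M j (kref j)) (M j i)"
          have r1: "real_of_int (mingcd (M j) (L j) (kref j)) \<le> real_of_int (gcd (M j (kref j)) (M j i))"
            using a(4) by (simp only: of_int_le_iff)
          have r2: "real_of_int (2 * \<bar>e j i - e j (kref j)\<bar>) = 2 * real_of_int \<bar>e j i - e j (kref j)\<bar>"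
            by simp
          have "real_of_int (2 * \<bar>e j i - e j (kref j)\<bar>) < real_of_int (gcd (M j (kref j)) (M j i))"
            unfolding r2 by (rule aux4[OF a(2) a(3) r1])
          then have "2 * \<bar>e j i - e j (kref j)\<bar> < gcd (M j (kref j)) (M j i)"
            by (simp only: of_int_less_iff)
          then show ?thesis using a(1) by simp
        qed
      qed
    qed
    then obtain f where f: "alg_A (L j) (M j) (kref j) (rt j) = Some f" "\<forall>i\<in>{1..L j}. f i = X j div M j i"
      by blast
    then have "K j = f" unfolding K_def using True by simp
    then show ?thesis using f True by simp
  next
    case False
    then have L1: "L j = 1" using L_pos j by force
    have "\<delta> j = M j 1" unfolding \<delta>_def delta_def using L1 Mpos[OF j, of 1] by simp
    then have "X j div M j 1 = 0" using X0[OF j] by simp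
    then show ?thesis unfolding K_def using False L1 by simp
  qed
  have KM: "K j i * M j i + rt j i = X j + e j i" if "j \<in> {1,2}" "i \<in> {1..L j}" for j i
  proof -
    have "X j = X j div M j i * M j i + X j mod M j i" by simp
    then show ?thesis using stage1[OF that(1)] that(2) Xmod[OF that] unfolding e_def by auto
  qed
  define E where "E = (\<lambda>j. rnd ((\<Sum>i=1..L j. real_of_int (e j i)) / real (L j)))"
  define Nh where "Nh = (\<lambda>j. rnd ((\<Sum>i=1..L j. real_of_int (K j i * M j i + rt j i)) / real (L j)))"
  have NhE: "Nh j = X j + E j" if j: "j \<in> {1,2}" for j
  proof -
    have Lp: "real (L j) > 0" using L_pos j by auto
    have "(\<Sum>i=1..L j. real_of_int (K j i * M j i + rt j i)) = (\<Sum>i=1..L j. real_of_int (X j) + real_of_int (e j i))"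
      using KM[OF j] by (intro sum.cong) auto
    also have "\<dots> = real (L j) * real_of_int (X j) + (\<Sum>i=1..L j. real_of_int (e j i))"
      by (simp add: sum.distrib)
    finally have "(\<Sum>i=1..L j. real_of_int (K j i * M j i + rt j i)) / real (L j)
        = real_of_int (X j) + (\<Sum>i=1..L j. real_of_int (e j i)) / real (L j)"
      using Lp by (simp add: field_simps)
    then show ?thesis unfolding Nh_def E_def by (simp add: rnd_int_add)
  qed
  have Et: "\<bar>E j\<bar> \<le> t j" if j: "j \<in> {1,2}" for j
  proof -
    have Lp: "real (L j) > 0" using L_pos j by auto
    have "\<bar>\<Sum>i=1..L j. real_of_int (e j i)\<bar> \<le> (\<Sum>i=1..L j. \<bar>real_of_int (e j i)\<bar>)"
      by (rule sum_abs)
    also have "\<dots> \<le> (\<Sum>i=1..L j. real_of_int (t j))"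
      using et[OF j] by (intro sum_mono) (metis of_int_abs of_int_le_iff)
    also have "\<dots> = real (L j) * real_of_int (t j)" by simp
    finally have "\<bar>(\<Sum>i=1..L j. real_of_int (e j i)) / real (L j)\<bar> \<le> real_of_int (t j)"
      using Lp by (simp add: field_simps)
    then have "\<bar>E j\<bar> \<le> rnd (real_of_int (t j))" unfolding E_def by (rule rnd_abs)
    then show ?thesis by (simp add: rnd_of_int)
  qed
  have "\<exists>f. alg_A 2 \<delta> kk Nh = Some f \<and> (\<forall>i\<in>{1..2}. f i = N div \<delta> i)"
  proof (rule alg_A_correct)
    show "kk \<in> {1..2}" using kk_ok by auto
    show "\<forall>i\<in>{1..2}. 0 < \<delta> i" using dpos by (auto simp: atLeastAtMost_iff le_Suc_eq numeral_2_eq_2)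
    show "0 \<le> N" by (rule N_range(1))
    have "{1..2::nat} = {1,2}" by auto
    then show "N < Lcm (\<delta> ` {1..2})" using N_range(2) unfolding \<delta>_def by (simp add: Lcm_2)
    show "\<forall>i\<in>{1..2} - {kk}. 2 * \<bar>Nh i - N mod \<delta> i - (Nh kk - N mod \<delta> kk)\<bar> < gcd (\<delta> kk) (\<delta> i)"
    proof
      fix i assume i: "i \<in> {1..2} - {kk}"
      then have ij: "i \<in> {1,2}" by auto
      have kj: "kk \<in> {1,2}" by (rule kk_ok)
      have "Nh i - N mod \<delta> i - (Nh kk - N mod \<delta> kk) = E i - E kk"
        using NhE[OF ij] NhE[OF kj] unfolding X_def by simp
      moreover have "\<bar>E i - E kk\<bar> \<le> t 1 + t 2"
        using Et[of 1] Et[of 2] ij kj by auto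
      moreover have "gcd (\<delta> kk) (\<delta> i) = g" unfolding g_def using ij kj i
        by (auto simp: gcd.commute)
      ultimately show "2 * \<bar>Nh i - N mod \<delta> i - (Nh kk - N mod \<delta> kk)\<bar> < gcd (\<delta> kk) (\<delta> i)"
        using tg[of 1] tg[of 2] by simp
    qed
  qed
  then obtain l where l: "alg_A 2 \<delta> kk Nh = Some l" "\<forall>i\<in>{1..2}. l i = N div \<delta> i" by blast
  have l': "l j = N div \<delta> j" if "j \<in> {1,2}" for j using l(2) that by auto
  define nh where "nh = (\<lambda>j i. l j * delta M L j div M j i + K j i)"
  define Nhat where "Nhat = rnd ((\<Sum>j\<in>{1,2}. \<Sum>i=1..L j. real_of_int (nh j i * M j i + rt j i))
                     / real (L 1 + L 2))"
  have nh_ok: "nh j i = N div M j i" if j: "j \<in> {1,2}" and i: "i \<in> {1..L j}" for j i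
  proof -
    obtain c where c: "\<delta> j = M j i * c" using dvdd[OF j i] by blast
    have Mp: "M j i > 0" using Mpos[OF j i] .
    have "l j * \<delta> j div M j i = l j * c" using c Mp by simp
    moreover have "N = X j + (l j * c) * M j i"
    proof -
      have e1: "N = N div \<delta> j * \<delta> j + N mod \<delta> j" by simp
      show ?thesis using e1 c l'[OF j] unfolding X_def by (simp add: algebra_simps)
    qed
    moreover have "(X j + (l j * c) * M j i) div M j i = l j * c + X j div M j i"
      by (rule div_mult_self1) (use Mp in simp)
    ultimately have "N div M j i = X j div M j i + l j * \<delta> j div M j i"
      by simp
    then show ?thesis unfolding nh_def using stage1[OF j] i \<delta>_def by simp
  qed
  have nh_ok2: "nh j i * M j i + rt j i = N + e j i" if j: "j \<in> {1,2}" and i: "i \<in> {1..L j}" for j i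
  proof -
    have "N = N div M j i * M j i + N mod M j i" by simp
    then show ?thesis unfolding nh_ok[OF j i] e_def by linarith
  qed
  define SE where "SE = (\<Sum>j\<in>{1,2}. \<Sum>i=1..L j. real_of_int (e j i))"
  have Lsum: "real (L 1 + L 2) > 0" using L_pos by auto
  have "(\<Sum>j\<in>{1,2}. \<Sum>i=1..L j. real_of_int (nh j i * M j i + rt j i))
      = (\<Sum>j\<in>{1,2}. \<Sum>i=1..L j. real_of_int N + real_of_int (e j i))"
    using nh_ok2 by (intro sum.cong) auto
  also have "\<dots> = real (L 1 + L 2) * real_of_int N + SE"
    unfolding SE_def by (simp add: sum.distrib algebra_simps)
  finally have F: "(\<Sum>j\<in>{1,2}. \<Sum>i=1..L j. real_of_int (nh j i * M j i + rt j i))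
      = real (L 1 + L 2) * real_of_int N + SE" .
  have F2: "(\<Sum>j\<in>{1,2}. \<Sum>i=1..L j. real_of_int (nh j i * M j i + rt j i)) / real (L 1 + L 2)
      = real_of_int N + SE / real (L 1 + L 2)"
    unfolding F using Lsum by (simp add: add_divide_distrib)
  have "Nhat = N + rnd (SE / real (L 1 + L 2))"
    unfolding Nhat_def F2 by (rule rnd_int_add)
  moreover have "\<bar>SE / real (L 1 + L 2)\<bar> \<le> (real (L 1) * \<tau> 1 + real (L 2) * \<tau> 2) / real (L 1 + L 2)"
  proof -
    have b: "\<bar>\<Sum>i=1..L j. real_of_int (e j i)\<bar> \<le> real (L j) * \<tau> j" if j: "j \<in> {1,2}" for j
    proof -
      have "\<bar>\<Sum>i=1..L j. real_of_int (e j i)\<bar> \<le> (\<Sum>i=1..L j. \<bar>real_of_int (e j i)\<bar>)"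
        by (rule sum_abs)
      also have "\<dots> \<le> (\<Sum>i=1..L j. \<tau> j)"
        using eb[OF j] by (intro sum_mono) simp
      finally show ?thesis by simp
    qed
    have "\<bar>SE\<bar> \<le> real (L 1) * \<tau> 1 + real (L 2) * \<tau> 2"
      unfolding SE_def using b[of 1] b[of 2] by simp
    then show ?thesis using Lsum by (simp add: divide_right_mono)
  qed
  ultimately have Nb: "\<bar>Nhat - N\<bar> \<le> rnd ((real (L 1) * \<tau> 1 + real (L 2) * \<tau> 2) / real (L 1 + L 2))"
    using rnd_abs by simp
  have Kj: "the (if 2 \<le> L j then alg_A (L j) (M j) (kref j) (rt j) else Some (\<lambda>_. 0)) = K j" for j
    unfolding K_def by simp
  have h1: "(if 2 \<le> L 1 then alg_A (L 1) (M 1) (kref 1) (rt 1) else Some (\<lambda>_. 0)) = Some (K 1)"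
    using stage1[of 1] by simp
  have h2: "(if 2 \<le> L 2 then alg_A (L 2) (M 2) (kref 2) (rt 2) else Some (\<lambda>_. 0)) = Some (K 2)"
    using stage1[of 2] by simp
  have hst: "alg_A 2 (delta M L) kk (\<lambda>j. rnd ((\<Sum>i=1..L j. real_of_int (K j i * M j i + rt j i)) / real (L j))) = Some l"
    using l(1) unfolding Nh_def \<delta>_def .
  have "two_stage L M rt kref kk = Some (nh, Nhat)"
    unfolding two_stage_def Let_def h1 h2 Kj hst
    by (simp add: nh_def Nhat_def)
  moreover have "\<forall>j\<in>{1,2}. \<forall>i\<in>{1..L j}. nh j i = (N - N mod M j i) div M j i"
  proof (intro ballI)
    fix j i assume j: "j \<in> {1,2}" and i: "i \<in> {1..L j}"
    have "N - N mod M j i = M j i * (N div M j i)" by (rule minus_mod_eq_mult_div)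
    then show "nh j i = (N - N mod M j i) div M j i" using nh_ok[OF j i] Mpos[OF j i] by simp
  qed
  ultimately show ?thesis using Nb by blast
qed

end
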